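(* Impose (A1)–(A6) and (A8), fix $x\in\mathcal X$ and $u\in[0,1]$, and write $\theta(x,u)=\mathbb E[Y_1^*\mid X=x,U=u,S_0=1,S_1=1]$. Then: (i) under (A7.1), $\underline y^*\le \theta(x,u)\le \dfrac{m_1^Y(x,u)-\underline y^*\,\Delta_S(x,u)}{m_0^S(x,u)}$; (ii) under (A7.2), $\dfrac{m_1^Y(x,u)-\overline y^*\,\Delta_S(x,u)}{m_0^S(x,u)}\le\theta(x,u)\le \overline y^*$; (iii) under (A7.3) (sub-case (a) or (b)), $\dfrac{m_1^Y(x,u)-\overline y^*\,\Delta_S(x,u)}{m_0^S(x,u)}\le\theta(x,u)\le\dfrac{m_1^Y(x,u)-\underline y^*\,\Delta_S(x,u)}{m_0^S(x,u)}$.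
   Context: Standing setup. On a common probability space: $X$ (covariates, support $\mathcal X$), $Z$ (instrument, support $\mathcal Z$), $W=(X,Z)$; latent real random variables $U,V$, jointly continuously distributed conditional on $X$, with $U\mid X$ and $V\mid X$ each Uniform$[0,1]$ (their joint dependence unrestricted); real potential outcomes of interest $Y_0^*,Y_1^*$. Given functions $P:\mathcal X\times\mathcal Z\to[0,1]$ and $Q:\{0,1\}\times\mathcal X\to[0,1]$, define the treatment $D=\mathbf 1\{P(W)\ge U\}$, potential selection indicators $S_d=\mathbf 1\{Q(d,X)\ge V\}$ ($d\in\{0,1\}$), selection indicator $S=DS_1+(1-D)S_0$, potential observable outcomes $Y_d=S_dY_d^*$ and observable outcome $Y=DY_1+(1-D)Y_0$. For $x\in\mathcal X$, $u\in[0,1]$, $d\in\{0,1\}$: $m_d^Y(x,u)=\mathbb E[Y_d\mid X=x,U=u]$, $m_d^S(x,u)=\mathbb E[S_d\mid X=x,U=u]$, $\Delta_S(x,u)=m_1^S(x,u)-m_0^S(x,u)$, and $\Delta^{OO}_{Y^*}(x,u)=\mathbb E[Y_1^*-Y_0^*\mid X=x,U=u,S_0=1,S_1=1]$. Ratios appearing are assumed well defined (nonzero denominators). Assumptions: (A1) $Z$ is independent of $(U,V,Y_0^*,Y_1^* )$ conditional on $X$; (A2) the distribution of $P(W)$ given $X$ is nondegenerate; (A3) $\mathbb E|Y_d^*|<\infty$ and $\mathbb E[(Y_d^* )^2]<\infty$ for $d=0,1$; (A4) $0<\mathbb P[D=1\mid X]<1$; (A5) $X$ is invariant to counterfactual manipulation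 of treatment; (A6) $Y_0^*$ and $Y_1^*$ have a common support $\mathcal Y^*\subseteq\mathbb R$; write $\underline y^*=\inf\mathcal Y^*\in\mathbb R\cup\{-\infty\}$ and $\overline y^*=\sup\mathcal Y^*\in\mathbb R\cup\{+\infty\}$, assumed known. Support cases: (A7.1) $\underline y^*>-\infty$, $\overline y^*=+\infty$, $\mathcal Y^*$ an interval; (A7.2) $\underline y^*=-\infty$, $\overline y^*<\infty$, $\mathcal Y^*$ an interval; (A7.3) $\underline y^*,\overline y^*$ both finite and either (a) $\mathcal Y^*$ is an interval or (b) $\underline y^*\in\mathcal Y^*$ and $\overline y^*\in\mathcal Y^*$. (A8) $Q(1,x)>Q(0,x)>0$ for all $x\in\mathcal X$. *)

theory Defs
  imports "HOL-Probability.Probability"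
begin

text \<open>
  K x u is (a version of) the conditional distribution of the triple
  (V, Y0*, Y1*) given X = x, U = u; an outcome is a triple
  w = (v, y0, y1).
\<close>

type_synonym latent = "real \<times> real \<times> real"

definition Vlat :: "latent \<Rightarrow> real" where
  "Vlat w = fst w"

definition Ystar :: "nat \<Rightarrow> latent \<Rightarrow> real" where
  "Ystar d w = (if d = 0 then fst (snd w) else snd (snd w))"

definition Ssel :: "(nat \<Rightarrow> 'x \<Rightarrow> real) \<Rightarrow> nat \<Rightarrow> 'x \<Rightarrow> latent \<Rightarrow> real" where
  "Ssel Q d x w = (if Q d x \<ge> Vlat w then 1 else 0)"

definition mY :: "('x \<Rightarrow> real \<Rightarrow> latent measure) \<Rightarrow> (nat \<Rightarrow> 'x \<Rightarrow> real) \<Rightarrow> nat \<Rightarrow> 'x \<Rightarrow> real \<Rightarrow> real" where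
  "mY K Q d x u = (\<integral>w. Ssel Q d x w * Ystar d w \<partial>(K x u))"

definition mS :: "('x \<Rightarrow> real \<Rightarrow> latent measure) \<Rightarrow> (nat \<Rightarrow> 'x \<Rightarrow> real) \<Rightarrow> nat \<Rightarrow> 'x \<Rightarrow> real \<Rightarrow> real" where
  "mS K Q d x u = (\<integral>w. Ssel Q d x w \<partial>(K x u))"

definition DeltaS :: "('x \<Rightarrow> real \<Rightarrow> latent measure) \<Rightarrow> (nat \<Rightarrow> 'x \<Rightarrow> real) \<Rightarrow> 'x \<Rightarrow> real \<Rightarrow> real" where
  "DeltaS K Q x u = mS K Q 1 x u - mS K Q 0 x u"

definition always_obs :: "(nat \<Rightarrow> 'x \<Rightarrow> real) \<Rightarrow> 'x \<Rightarrow> latent set" where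
  "always_obs Q x = {w. Ssel Q 0 x w = 1 \<and> Ssel Q 1 x w = 1}"

definition theta :: "('x \<Rightarrow> real \<Rightarrow> latent measure) \<Rightarrow> (nat \<Rightarrow> 'x \<Rightarrow> real) \<Rightarrow> 'x \<Rightarrow> real \<Rightarrow> real" where
  "theta K Q x u =
     (\<integral>w. indicator (always_obs Q x) w * Ystar 1 w \<partial>(K x u))
       / measure (K x u) (always_obs Q x)"

end

theory Submission
  imports Defs
begin

lemma aux:
  fixes M :: "'a measure" and f :: "'a \<Rightarrow> real"
  assumes P: "prob_space M" and A: "A \<in> sets M" and B: "B \<in> sets M" and AB: "A \<subseteq> B"
    and f: "integrable M f" and ge: "AE w in M. c \<le> f w"
  shows "c * measure M A \<le> (\<integral>w. indicator A w * f w \<partial>M)"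
    and "(\<integral>w. indicator A w * f w \<partial>M) \<le> (\<integral>w. indicator B w * f w \<partial>M) - c * (measure M B - measure M A)"
proof -
  interpret prob_space M by fact
  have iS: "(\<integral>w. indicator S w * c \<partial>M) = c * measure M S" if "S \<in> sets M" for S
    using that by simp
  have intS: "integrable M (\<lambda>w. indicator S w * f w)" if "S \<in> sets M" for S
    using integrable_real_mult_indicator[OF that f] by (simp add: mult.commute)
  have monS: "(\<integral>w. indicator S w * c \<partial>M) \<le> (\<integral>w. indicator S w * f w \<partial>M)" if "S \<in> sets M" for S
  proof (rule integral_mono_AE)
    show "integrable M (\<lambda>w. indicator S w * c)"
      using integrable_real_mult_indicator[OF that integrable_const[of c]] by (simp add: mult.commute)
    show "integrable M (\<lambda>w. indicator S w * f w)" using intS[OF that] .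
    show "AE w in M. indicator S w * c \<le> indicator S w * f w"
      using ge by (auto simp: indicator_def)
  qed
  show "c * measure M A \<le> (\<integral>w. indicator A w * f w \<partial>M)" using monS[OF A] unfolding iS[OF A] .
  have BA: "B - A \<in> sets M" using A B by auto
  have split: "(\<integral>w. indicator B w * f w \<partial>M) = (\<integral>w. indicator A w * f w \<partial>M) + (\<integral>w. indicator (B - A) w * f w \<partial>M)"
  proof -
    have "(\<lambda>w. indicator B w * f w) = (\<lambda>w. indicator A w * f w + indicator (B - A) w * f w)"
      using AB by (auto simp: indicator_def fun_eq_iff)
    then show ?thesis using Bochner_Integration.integral_add[OF intS[OF A] intS[OF BA]] by simp
  qed
  have "measure M (B - A) = measure M B - measure M A"
    using A B AB by (simp add: finite_measure_Diff)
  then show "(\<integral>w. indicator A w * f w \<partial>M) \<le> (\<integral>w. indicator B w * f w \<partial>M) - c * (measure M B - measure M A)"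
    using monS[OF BA] split unfolding iS[OF BA] by simp
qed
lemma aux2:
  fixes M :: "'a measure" and f :: "'a \<Rightarrow> real"
  assumes P: "prob_space M" and A: "A \<in> sets M" and B: "B \<in> sets M" and AB: "A \<subseteq> B"
    and f: "integrable M f" and ge: "AE w in M. f w \<le> c"
  shows "(\<integral>w. indicator A w * f w \<partial>M) \<le> c * measure M A"
    and "(\<integral>w. indicator B w * f w \<partial>M) - c * (measure M B - measure M A) \<le> (\<integral>w. indicator A w * f w \<partial>M)"
proof -
  have "AE w in M. - c \<le> - f w" using ge by auto
  from aux[OF P A B AB _ this] f show "(\<integral>w. indicator A w * f w \<partial>M) \<le> c * measure M A"
    and "(\<integral>w. indicator B w * f w \<partial>M) - c * (measure M B - measure M A) \<le> (\<integral>w. indicator A w * f w \<partial>M)"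
    by (simp_all add: integral_minus)
qed

theorem proposition1:
  fixes K :: "'x \<Rightarrow> real \<Rightarrow> latent measure"
    and Q :: "nat \<Rightarrow> 'x \<Rightarrow> real"
    and Xset :: "'x set" and Ys :: "real set"
    and x :: 'x and u :: real
  assumes x_in: "x \<in> Xset" and u_in: "u \<in> {0..1}"
    and Q_range: "\<forall>d\<in>{0,1}. \<forall>x'\<in>Xset. Q d x' \<in> {0..1}"
    and A8: "\<forall>x'\<in>Xset. Q 1 x' > Q 0 x' \<and> Q 0 x' > 0"
    and prob: "prob_space (K x u)"
    and sets_K: "sets (K x u) = sets borel"
    and A3: "\<forall>d\<in>{0,1}. integrable (K x u) (Ystar d) \<and> integrable (K x u) (\<lambda>w. (Ystar d w)\<^sup>2)"
    and A6: "AE w in K x u. Ystar 0 w \<in> Ys \<and> Ystar 1 w \<in> Ys"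
    and denom1: "mS K Q 0 x u \<noteq> 0"
    and denom2: "measure (K x u) (always_obs Q x) \<noteq> 0"
  shows
    "(bdd_below Ys \<and> \<not> bdd_above Ys \<and> is_interval Ys \<longrightarrow>
        Inf Ys \<le> theta K Q x u \<and>
        theta K Q x u \<le> (mY K Q 1 x u - Inf Ys * DeltaS K Q x u) / mS K Q 0 x u)
     \<and> (\<not> bdd_below Ys \<and> bdd_above Ys \<and> is_interval Ys \<longrightarrow>
        (mY K Q 1 x u - Sup Ys * DeltaS K Q x u) / mS K Q 0 x u \<le> theta K Q x u \<and>
        theta K Q x u \<le> Sup Ys)
     \<and> (bdd_below Ys \<and> bdd_above Ys \<and> (is_interval Ys \<or> (Inf Ys \<in> Ys \<and> Sup Ys \<in> Ys)) \<longrightarrow>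
        (mY K Q 1 x u - Sup Ys * DeltaS K Q x u) / mS K Q 0 x u \<le> theta K Q x u \<and>
        theta K Q x u \<le> (mY K Q 1 x u - Inf Ys * DeltaS K Q x u) / mS K Q 0 x u)"
proof -
  let ?M = "K x u"
  define A where "A = {w::latent. fst w \<le> Q 0 x}"
  define B where "B = {w::latent. fst w \<le> Q 1 x}"
  have cl: "{w::latent. fst w \<le> c} \<in> sets ?M" for c
    unfolding sets_K by (intro borel_closed closed_Collect_le continuous_intros)
  have Asets: "A \<in> sets ?M" and Bsets: "B \<in> sets ?M" unfolding A_def B_def using cl by auto
  have Q01: "Q 0 x < Q 1 x" using A8 x_in by auto
  have AB: "A \<subseteq> B" using Q01 unfolding A_def B_def by auto
  have Ss: "Ssel Q d x = indicator {w. fst w \<le> Q d x}" for d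
    by (auto simp: Ssel_def Vlat_def indicator_def fun_eq_iff)
  have obs: "always_obs Q x = A"
    using Q01 by (auto simp: always_obs_def A_def Ss indicator_def)
  have mS0: "mS K Q 0 x u = measure ?M A" and mS1: "mS K Q 1 x u = measure ?M B"
    using Asets Bsets unfolding mS_def Ss A_def B_def by simp_all
  have mY1: "mY K Q 1 x u = (\<integral>w. indicator B w * Ystar 1 w \<partial>?M)"
    unfolding mY_def Ss B_def ..
  have th: "theta K Q x u = (\<integral>w. indicator A w * Ystar 1 w \<partial>?M) / measure ?M A"
    by (simp add: theta_def obs)
  have DS: "DeltaS K Q x u = measure ?M B - measure ?M A" unfolding DeltaS_def mS0 mS1 ..
  have p0: "measure ?M A > 0" using denom2 obs by (simp add: zero_less_measure_iff)
  have f: "integrable ?M (Ystar 1)" using A3 by auto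
  have L: "c \<le> theta K Q x u \<and> theta K Q x u \<le> (mY K Q 1 x u - c * DeltaS K Q x u) / mS K Q 0 x u"
    if "AE w in ?M. c \<le> Ystar 1 w" for c
  proof -
    note a = aux[OF prob Asets Bsets AB f that]
    show ?thesis unfolding th mY1 DS mS0 using a p0
      by (simp add: pos_le_divide_eq divide_right_mono)
  qed
  have U: "(mY K Q 1 x u - c * DeltaS K Q x u) / mS K Q 0 x u \<le> theta K Q x u \<and> theta K Q x u \<le> c"
    if "AE w in ?M. Ystar 1 w \<le> c" for c
  proof -
    note a = aux2[OF prob Asets Bsets AB f that]
    show ?thesis unfolding th mY1 DS mS0 using a p0
      by (simp add: pos_divide_le_eq divide_right_mono)
  qed
  have lo: "AE w in ?M. Inf Ys \<le> Ystar 1 w" if "bdd_below Ys"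
    using A6 by eventually_elim (use that in \<open>auto intro: cInf_lower\<close>)
  have hi: "AE w in ?M. Ystar 1 w \<le> Sup Ys" if "bdd_above Ys"
    using A6 by eventually_elim (use that in \<open>auto intro: cSup_upper\<close>)
  have L': "bdd_below Ys \<Longrightarrow> Inf Ys \<le> theta K Q x u \<and> theta K Q x u \<le> (mY K Q 1 x u - Inf Ys * DeltaS K Q x u) / mS K Q 0 x u"
    using L lo by blast
  have U': "bdd_above Ys \<Longrightarrow> (mY K Q 1 x u - Sup Ys * DeltaS K Q x u) / mS K Q 0 x u \<le> theta K Q x u \<and> theta K Q x u \<le> Sup Ys"
    using U hi by blast
  show ?thesis using L' U' by (intro conjI impI) simp_all
qed

end
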